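(* Let $n\ge1$, let $\beta$ be a braid on $n$ strands with exponent sum $w$, and let $\Delta=\Delta_n$ be the Garside positive half-twist braid on $n$ strands. Then the coefficient of $v^{w-n+1}$ in $P_{\widehat\beta}(v,z)$ equals $(-1)^{n-1}$ times the coefficient of $v^{w+n^2-1}$ in $P_{\widehat{\beta\Delta^2}}(v,z)$ (coefficients regarded as Laurent polynomials in $z$).
   Context: For a braid $\gamma$, $\widehat\gamma$ denotes its usual closure, oriented by the braid direction. The Homfly polynomial $P_L(v,z)$ of an oriented link $L$ is the isotopy invariant normalized by $P=1$ on the unknot and satisfying $v^{-1}P_{L_+}-vP_{L_-}=zP_{L_0}$, where $L_+,L_-,L_0$ differ at one crossing which is positive, negative, resp. smoothed. Equivalently $P_D=v^{\mathrm{writhe}(D)}H_D$ with $H$ the framed Homfly polynomial ($H_{L_+}-H_{L_-}=zH_{L_0}$, positive kink multiplies by $v$, negative kink by $v^{-1}$, $H=1$ on the crossingless unknot). *)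

theory Defs
  imports Main "HOL-Library.Poly_Mapping" "HOL-Library.Product_Plus"
begin

text \<open>Laurent polynomials in two variables v, z with integer coefficients:
  finitely supported maps from exponent pairs (a,b) (monomial v^a z^b) to int,
  with convolution product.\<close>
type_synonym laurent2 = "(int \<times> int) \<Rightarrow>\<^sub>0 int"

definition mono :: "int \<Rightarrow> int \<Rightarrow> laurent2" where
  "mono a b = Poly_Mapping.single (a, b) 1"

definition coeff2 :: "laurent2 \<Rightarrow> int \<Rightarrow> int \<Rightarrow> int" where
  "coeff2 p a b = Poly_Mapping.lookup p (a, b)"

text \<open>Braid words on n strands: list of nonzero integers g with |g| \<le> n-1;
  the letter i > 0 is sigma_i, the letter -i is sigma_i^{-1}.\<close>
definition braid_word :: "nat \<Rightarrow> int list \<Rightarrow> bool" where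
  "braid_word n w \<longleftrightarrow> (\<forall>g\<in>set w. g \<noteq> 0 \<and> \<bar>g\<bar> \<le> int n - 1)"

definition exp_sum :: "int list \<Rightarrow> int" where
  "exp_sum w = sum_list (map sgn w)"

fun garside :: "nat \<Rightarrow> int list" where
  "garside 0 = []"
| "garside (Suc 0) = []"
| "garside (Suc (Suc k)) = garside (Suc k) @ rev (map int [1..<Suc (Suc k)])"

text \<open>A function assigning to each braid word on n strands the Homfly polynomial
  of its closure. The axioms: invariance under the braid group relations
  (so it is a function on braids), invariance under conjugation and both
  Markov stabilisations (so by Markov's theorem it is an isotopy invariant
  of the closure), the skein relation
  v^{-1} P(L+) - v P(L-) = z P(L0) at a braid crossing, written without
  inverses as P(L+) = v^2 P(L-) + v z P(L0), and P(unknot) = 1.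
  These axioms characterise the Homfly polynomial on closed braids.\<close>
definition is_homfly :: "(nat \<Rightarrow> int list \<Rightarrow> laurent2) \<Rightarrow> bool" where
  "is_homfly P \<longleftrightarrow>
     P 1 [] = 1
   \<and> (\<forall>n u x i. braid_word n (u @ x) \<and> braid_word n [i] \<longrightarrow>
        P n (u @ [i, -i] @ x) = P n (u @ x))
   \<and> (\<forall>n u x i j. braid_word n (u @ x) \<and> braid_word n [i, j] \<and> \<bar>\<bar>i\<bar> - \<bar>j\<bar>\<bar> \<ge> 2 \<longrightarrow>
        P n (u @ [i, j] @ x) = P n (u @ [j, i] @ x))
   \<and> (\<forall>n u x i. braid_word n (u @ x) \<and> i \<ge> 1 \<and> i + 1 \<le> int n - 1 \<longrightarrow>
        P n (u @ [i, i + 1, i] @ x) = P n (u @ [i + 1, i, i + 1] @ x))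
   \<and> (\<forall>n u x. braid_word n (u @ x) \<longrightarrow> P n (u @ x) = P n (x @ u))
   \<and> (\<forall>n u. n \<ge> 1 \<and> braid_word n u \<longrightarrow>
        P (Suc n) (u @ [int n]) = P n u \<and> P (Suc n) (u @ [- int n]) = P n u)
   \<and> (\<forall>n u x i. braid_word n (u @ x) \<and> braid_word n [i] \<and> i > 0 \<longrightarrow>
        P n (u @ [i] @ x) = mono 2 0 * P n (u @ [-i] @ x) + mono 1 1 * P n (u @ x))"

end

theory Submission
  imports Defs
begin


lemma lookup_single_mult:
  "Poly_Mapping.lookup (Poly_Mapping.single k (1::int) * p) c = Poly_Mapping.lookup p (c - (k::int\<times>int))"
proof -
  have "Poly_Mapping.lookup (Poly_Mapping.single k (1::int) * p) c
     = (\<Sum>l. (1 when l = k) * (\<Sum>q. Poly_Mapping.lookup p q when c = l + q))"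
    by (simp add: lookup_mult lookup_single when_def)
  also have "\<dots> = (\<Sum>q. Poly_Mapping.lookup p q when c = k + q)"
    by (simp add: when_mult)
  also have "\<dots> = (\<Sum>q. Poly_Mapping.lookup p q when q = c - k)"
    proof (rule Sum_any.cong)
    fix q :: "int \<times> int"
    have "(c = k + q) = (q = c - k)" by (cases c, cases k, cases q) auto
    then show "(Poly_Mapping.lookup p q when c = k + q) = (Poly_Mapping.lookup p q when q = c - k)" by simp
  qed
  also have "\<dots> = Poly_Mapping.lookup p (c - k)" by simp
  finally show ?thesis .
qed

lemma coeff2_mono_mult: "coeff2 (mono a b * p) c d = coeff2 p (c - a) (d - b)"
  by (simp add: coeff2_def mono_def lookup_single_mult)

lemma mono_mult: "mono a b * mono c d = mono (a+c) (b+d)"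
  by (simp add: mono_def mult_single)

lemma mono_00: "mono 0 0 = 1"
  by (metis mono_def single_one zero_prod_def)

lemma coeff2_one: "coeff2 1 a b = (if a = 0 \<and> b = 0 then 1 else 0)"
  by (simp add: coeff2_def lookup_one zero_prod_def)

lemma coeff2_add: "coeff2 (p + q) a b = coeff2 p a b + coeff2 q a b"
  by (simp add: coeff2_def lookup_add)
lemma coeff2_diff: "coeff2 (p - q) a b = coeff2 p a b - coeff2 q a b"
  by (simp add: coeff2_def lookup_minus)


lemma bw_append[simp]: "braid_word n (u @ v) \<longleftrightarrow> braid_word n u \<and> braid_word n v"
  by (auto simp: braid_word_def)
lemma bw_Cons[simp]: "braid_word n (g # v) \<longleftrightarrow> g \<noteq> 0 \<and> \<bar>g\<bar> \<le> int n - 1 \<and> braid_word n v"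
  by (auto simp: braid_word_def)
lemma bw_Nil[simp]: "braid_word n []"
  by (auto simp: braid_word_def)
lemma bw_mono: "braid_word n w \<Longrightarrow> n \<le> m \<Longrightarrow> braid_word m w"
  by (auto simp: braid_word_def)
lemma bw_1: "braid_word 1 w \<longleftrightarrow> w = []"
  by (cases w) (auto simp: braid_word_def)

lemma es_append[simp]: "exp_sum (u @ v) = exp_sum u + exp_sum v"
  by (simp add: exp_sum_def)
lemma es_Cons[simp]: "exp_sum (g # v) = sgn g + exp_sum v"
  by (simp add: exp_sum_def)
lemma es_Nil[simp]: "exp_sum [] = 0"
  by (simp add: exp_sum_def)

inductive beq :: "nat \<Rightarrow> int list \<Rightarrow> int list \<Rightarrow> bool" for n where
  refl: "braid_word n w \<Longrightarrow> beq n w w"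
| sym: "beq n w w' \<Longrightarrow> beq n w' w"
| trans: "beq n w w' \<Longrightarrow> beq n w' w'' \<Longrightarrow> beq n w w''"
| cancel: "braid_word n (u @ x) \<Longrightarrow> braid_word n [i] \<Longrightarrow> beq n (u @ [i, -i] @ x) (u @ x)"
| comm: "braid_word n (u @ x) \<Longrightarrow> braid_word n [i, j] \<Longrightarrow> \<bar>\<bar>i\<bar> - \<bar>j\<bar>\<bar> \<ge> 2 \<Longrightarrow>
     beq n (u @ [i, j] @ x) (u @ [j, i] @ x)"
| braid: "braid_word n (u @ x) \<Longrightarrow> i \<ge> 1 \<Longrightarrow> i + 1 \<le> int n - 1 \<Longrightarrow>
     beq n (u @ [i, i + 1, i] @ x) (u @ [i + 1, i, i + 1] @ x)"

lemma beq_bw: "beq n w w' \<Longrightarrow> braid_word n w \<and> braid_word n w'"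
  by (induction rule: beq.induct) auto

lemma beq_es: "beq n w w' \<Longrightarrow> exp_sum w = exp_sum w'"
  by (induction rule: beq.induct) (auto simp: sgn_if)

lemma beq_mono: "beq n w w' \<Longrightarrow> n \<le> m \<Longrightarrow> beq m w w'"
proof (induction rule: beq.induct)
  case (refl w) then show ?case using bw_mono beq.refl by blast
next
  case (sym w w') then show ?case using beq.sym by blast
next
  case (trans w w' w'') then show ?case using beq.trans by blast
next
  case (cancel u x i) then show ?case using bw_mono beq.cancel by blast
next
  case (comm u x i j) then show ?case using bw_mono beq.comm by blast
next
  case (braid u x i) then show ?case using bw_mono beq.braid[of m u x i] by auto
qed

lemma beq_ctx: "beq n w w' \<Longrightarrow> braid_word n u \<Longrightarrow> braid_word n x \<Longrightarrow> beq n (u @ w @ x) (u @ w' @ x)"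
proof (induction rule: beq.induct)
  case (refl w) then show ?case by (simp add: beq.refl)
next
  case (sym w w') then show ?case using beq.sym by blast
next
  case (trans w w' w'') then show ?case using beq.trans by blast
next
  case (cancel u' x' i) then show ?case using beq.cancel[of n "u @ u'" "x' @ x" i] by simp
next
  case (comm u' x' i j) then show ?case using beq.comm[of n "u @ u'" "x' @ x" i j] by simp
next
  case (braid u' x' i) then show ?case using beq.braid[of n "u @ u'" "x' @ x" i] by simp
qed

lemma beq_ctxL: "beq n w w' \<Longrightarrow> braid_word n u \<Longrightarrow> beq n (u @ w) (u @ w')"
  using beq_ctx[of n w w' u "[]"] by simp
lemma beq_ctxR: "beq n w w' \<Longrightarrow> braid_word n x \<Longrightarrow> beq n (w @ x) (w' @ x)"
  using beq_ctx[of n w w' "[]" x] by simp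

lemma beq_commute_word:
  "\<forall>g\<in>set w. \<bar>\<bar>g\<bar> - \<bar>h\<bar>\<bar> \<ge> 2 \<Longrightarrow> braid_word n (u @ [h] @ w @ x) \<Longrightarrow>
   beq n (u @ [h] @ w @ x) (u @ w @ [h] @ x)"
proof (induction w arbitrary: u)
  case Nil then show ?case by (simp add: beq.refl)
next
  case (Cons g w)
  have 1: "beq n (u @ [h, g] @ (w @ x)) (u @ [g, h] @ (w @ x))"
    using Cons.prems by (intro beq.comm) (auto simp: abs_minus_commute)
  have 2: "beq n ((u @ [g]) @ [h] @ w @ x) ((u @ [g]) @ w @ [h] @ x)"
    using Cons.IH[of "u @ [g]"] Cons.prems by simp
  show ?case using beq.trans[OF 1] 2 by simp
qed

context fixes P :: "nat \<Rightarrow> int list \<Rightarrow> laurent2" assumes H: "is_homfly P"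
begin
lemma H_one: "P 1 [] = 1" using H unfolding is_homfly_def by blast
lemma H_cancel: "braid_word n (u @ x) \<Longrightarrow> braid_word n [i] \<Longrightarrow> P n (u @ [i, -i] @ x) = P n (u @ x)"
proof -
  have "\<forall>n u x i. braid_word n (u @ x) \<and> braid_word n [i] \<longrightarrow>
        P n (u @ [i, -i] @ x) = P n (u @ x)" using H unfolding is_homfly_def by (elim conjE) assumption
  then show "braid_word n (u @ x) \<Longrightarrow> braid_word n [i] \<Longrightarrow> ?thesis" by blast
qed
lemma H_comm: "braid_word n (u @ x) \<Longrightarrow> braid_word n [i, j] \<Longrightarrow> \<bar>\<bar>i\<bar> - \<bar>j\<bar>\<bar> \<ge> 2 \<Longrightarrow>
        P n (u @ [i, j] @ x) = P n (u @ [j, i] @ x)"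
proof -
  have "\<forall>n u x i j. braid_word n (u @ x) \<and> braid_word n [i, j] \<and> \<bar>\<bar>i\<bar> - \<bar>j\<bar>\<bar> \<ge> 2 \<longrightarrow>
        P n (u @ [i, j] @ x) = P n (u @ [j, i] @ x)" using H unfolding is_homfly_def by blast
  then show "braid_word n (u @ x) \<Longrightarrow> braid_word n [i, j] \<Longrightarrow> \<bar>\<bar>i\<bar> - \<bar>j\<bar>\<bar> \<ge> 2 \<Longrightarrow> ?thesis" by blast
qed
lemma H_braid: "braid_word n (u @ x) \<Longrightarrow> i \<ge> 1 \<Longrightarrow> i + 1 \<le> int n - 1 \<Longrightarrow>
        P n (u @ [i, i + 1, i] @ x) = P n (u @ [i + 1, i, i + 1] @ x)"
proof -
  have "\<forall>n u x i. braid_word n (u @ x) \<and> i \<ge> 1 \<and> i + 1 \<le> int n - 1 \<longrightarrow>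
        P n (u @ [i, i + 1, i] @ x) = P n (u @ [i + 1, i, i + 1] @ x)" using H unfolding is_homfly_def by blast
  then show "braid_word n (u @ x) \<Longrightarrow> i \<ge> 1 \<Longrightarrow> i + 1 \<le> int n - 1 \<Longrightarrow> ?thesis" by blast
qed
lemma H_conj: "braid_word n (u @ x) \<Longrightarrow> P n (u @ x) = P n (x @ u)"
proof -
  have "\<forall>n u x. braid_word n (u @ x) \<longrightarrow> P n (u @ x) = P n (x @ u)" using H unfolding is_homfly_def by blast
  then show "braid_word n (u @ x) \<Longrightarrow> ?thesis" by blast
qed
lemma H_markov: "n \<ge> 1 \<Longrightarrow> braid_word n u \<Longrightarrow> P (Suc n) (u @ [int n]) = P n u"
proof -
  have "\<forall>n u. n \<ge> 1 \<and> braid_word n u \<longrightarrow>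
        P (Suc n) (u @ [int n]) = P n u \<and> P (Suc n) (u @ [- int n]) = P n u" using H unfolding is_homfly_def by blast
  then show "n \<ge> 1 \<Longrightarrow> braid_word n u \<Longrightarrow> ?thesis" by blast
qed
lemma H_markov': "n \<ge> 1 \<Longrightarrow> braid_word n u \<Longrightarrow> P (Suc n) (u @ [- int n]) = P n u"
proof -
  have "\<forall>n u. n \<ge> 1 \<and> braid_word n u \<longrightarrow>
        P (Suc n) (u @ [int n]) = P n u \<and> P (Suc n) (u @ [- int n]) = P n u" using H unfolding is_homfly_def by blast
  then show "n \<ge> 1 \<Longrightarrow> braid_word n u \<Longrightarrow> ?thesis" by blast
qed
lemma H_skein: "braid_word n (u @ x) \<Longrightarrow> braid_word n [i] \<Longrightarrow> i > 0 \<Longrightarrow>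
        P n (u @ [i] @ x) = mono 2 0 * P n (u @ [-i] @ x) + mono 1 1 * P n (u @ x)"
proof -
  have "\<forall>n u x i. braid_word n (u @ x) \<and> braid_word n [i] \<and> i > 0 \<longrightarrow>
        P n (u @ [i] @ x) = mono 2 0 * P n (u @ [-i] @ x) + mono 1 1 * P n (u @ x)" using H unfolding is_homfly_def by blast
  then show "braid_word n (u @ x) \<Longrightarrow> braid_word n [i] \<Longrightarrow> i > 0 \<Longrightarrow> ?thesis" by blast
qed
end

lemma beq_P:
  assumes H: "is_homfly P" and "beq n w w'" shows "P n w = P n w'"
  using assms(2)
proof (induction rule: beq.induct)
  case (cancel u x i) then show ?case using H_cancel[OF H] by blast
next
  case (comm u x i j) then show ?case using H_comm[OF H] by blast
next
  case (braid u x i) then show ?case using H_braid[OF H] by blast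
qed auto

definition good :: "nat \<Rightarrow> ('b \<Rightarrow> 'b \<Rightarrow> 'b) \<Rightarrow> ('b \<Rightarrow> 'b \<Rightarrow> 'b) \<Rightarrow> (int list \<Rightarrow> 'b) \<Rightarrow> bool" where
  "good m S S' f \<longleftrightarrow> (\<forall>w w'. beq m w w' \<longrightarrow> f w = f w') \<and>
    (\<forall>u x i. braid_word m (u @ x) \<and> braid_word m [i] \<and> i > 0 \<longrightarrow>
        f (u @ [i] @ x) = S (f (u @ [-i] @ x)) (f (u @ x)) \<and>
        f (u @ [-i] @ x) = S' (f (u @ [i] @ x)) (f (u @ x)))"



lemma goodD1: "good m S S' f \<Longrightarrow> beq m w w' \<Longrightarrow> f w = f w'"
  unfolding good_def by blast
lemma goodD2: "good m S S' f \<Longrightarrow> braid_word m (u @ x) \<Longrightarrow> braid_word m [i] \<Longrightarrow> i > 0 \<Longrightarrow>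
   f (u @ [i] @ x) = S (f (u @ [-i] @ x)) (f (u @ x))"
  unfolding good_def by blast
lemma goodD3: "good m S S' f \<Longrightarrow> braid_word m (u @ x) \<Longrightarrow> braid_word m [i] \<Longrightarrow> i > 0 \<Longrightarrow>
   f (u @ [-i] @ x) = S' (f (u @ [i] @ x)) (f (u @ x))"
  unfolding good_def by blast

lemma good_ctx:
  assumes "good (Suc N) S S' f" "braid_word (Suc N) p" "braid_word (Suc N) q"
  shows "good N S S' (\<lambda>b. f (p @ b @ q))"
  unfolding good_def
proof (intro conjI allI impI)
  fix w w' assume "beq N w w'"
  then have "beq (Suc N) w w'" by (rule beq_mono) simp
  then have "beq (Suc N) (p @ w @ q) (p @ w' @ q)" using assms by (intro beq_ctx)
  then show "f (p @ w @ q) = f (p @ w' @ q)" using goodD1[OF assms(1)] by blast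
next
  fix u x i assume a: "braid_word N (u @ x) \<and> braid_word N [i] \<and> 0 < i"
  then have b: "braid_word (Suc N) ((p @ u) @ (x @ q))" "braid_word (Suc N) [i]"
    using assms bw_mono[of N _ "Suc N"] by auto
  show "f (p @ (u @ [i] @ x) @ q) = S (f (p @ (u @ [- i] @ x) @ q)) (f (p @ (u @ x) @ q))"
    using goodD2[OF assms(1) b] a by simp
  show "f (p @ (u @ [- i] @ x) @ q) = S' (f (p @ (u @ [i] @ x) @ q)) (f (p @ (u @ x) @ q))"
    using goodD3[OF assms(1) b] a by simp
qed

lemma commute_small:
  assumes "braid_word (N - 1) c" "braid_word (Suc N) (u @ [int N] @ c @ x)"
  shows "beq (Suc N) (u @ [int N] @ c @ x) (u @ c @ [int N] @ x)"
proof (rule beq_commute_word[OF _ assms(2)])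
  show "\<forall>g\<in>set c. 2 \<le> \<bar>\<bar>g\<bar> - \<bar>int N\<bar>\<bar>" using assms(1) by (auto simp: braid_word_def)
qed

lemma det:
  assumes "good m S S' f" "good m S S' g" "1 \<le> m"
    "\<And>a. braid_word (m - 1) a \<Longrightarrow> f a = g a"
    "\<And>a b. braid_word (m - 1) a \<Longrightarrow> braid_word (m - 1) b \<Longrightarrow> 2 \<le> m \<Longrightarrow>
        f (a @ [int m - 1] @ b) = g (a @ [int m - 1] @ b)"
    "braid_word m \<beta>"
  shows "f \<beta> = g \<beta>"
  using assms
proof (induction m arbitrary: f g \<beta>)
  case 0 then show ?case by simp
next
  case (Suc N)
  show ?case
  proof (cases "N = 0")
    case True
    then have "\<beta> = []" using Suc.prems(6) bw_1 by simp
    then show ?thesis using Suc.prems(4)[of "[]"] by simp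
  next
    case False
    note gf = Suc.prems(1) and gg = Suc.prems(2)
    have fa: "\<And>a. braid_word N a \<Longrightarrow> f a = g a" using Suc.prems(4) by simp
    have fab: "\<And>a b. braid_word N a \<Longrightarrow> braid_word N b \<Longrightarrow>
        f (a @ [int N] @ b) = g (a @ [int N] @ b)" using Suc.prems(5) False by simp
    have claim: "braid_word (Suc N) \<beta> \<Longrightarrow> \<forall>a b. braid_word N a \<longrightarrow> braid_word N b \<longrightarrow>
       f (a @ \<beta>) = g (a @ \<beta>) \<and> f (a @ [int N] @ b @ \<beta>) = g (a @ [int N] @ b @ \<beta>)" for \<beta>
    proof (induction \<beta>)
      case Nil then show ?case using fa fab by simp
    next
      case (Cons h \<beta>')
      have IH: "\<And>a b. braid_word N a \<Longrightarrow> braid_word N b \<Longrightarrow>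
          f (a @ \<beta>') = g (a @ \<beta>') \<and> f (a @ [int N] @ b @ \<beta>') = g (a @ [int N] @ b @ \<beta>')"
        using Cons by simp
      have hb: "h \<noteq> 0" "\<bar>h\<bar> \<le> int N" "braid_word (Suc N) \<beta>'" using Cons.prems by auto
      have bN: "braid_word (Suc N) [int N]" "braid_word (Suc N) [- int N]" using False by auto
      have X: "f (a @ [int N] @ b @ [int N] @ \<beta>') = g (a @ [int N] @ b @ [int N] @ \<beta>')"
        if ab: "braid_word N a" "braid_word N b" for a b
      proof -
        have abS: "braid_word (Suc N) a" "braid_word (Suc N) b" using ab bw_mono by auto
        let ?p = "a @ [int N]" and ?q = "[int N] @ \<beta>'"
        have pq: "braid_word (Suc N) ?p" "braid_word (Suc N) ?q" using abS hb bN by auto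
        have "(\<lambda>b. f (?p @ b @ ?q)) b = (\<lambda>b. g (?p @ b @ ?q)) b"
        proof (rule Suc.IH[of "\<lambda>b. f (?p @ b @ ?q)" "\<lambda>b. g (?p @ b @ ?q)" b])
          show "good N S S' (\<lambda>b. f (?p @ b @ ?q))" by (rule good_ctx[OF gf pq])
          show "good N S S' (\<lambda>b. g (?p @ b @ ?q))" by (rule good_ctx[OF gg pq])
          show "1 \<le> N" using False by simp
          show "braid_word N b" by fact
        next
          fix c assume c: "braid_word (N - 1) c"
          have cS: "braid_word N c" "braid_word (Suc N) c" using c bw_mono by auto
          have e: "\<And>F. good (Suc N) S S' F \<Longrightarrow> F (?p @ c @ ?q) =
               S (F ((a @ c) @ \<beta>')) (F ((a @ c) @ [int N] @ [] @ \<beta>'))"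
          proof -
            fix F assume gF: "good (Suc N) S S' F"
            have "F (?p @ c @ ?q) = F (a @ c @ [int N] @ ([int N] @ \<beta>'))"
              using goodD1[OF gF commute_small[OF c, of a "[int N] @ \<beta>'"]] abS cS hb bN by simp
            also have "\<dots> = S (F ((a @ c) @ [- int N] @ ([int N] @ \<beta>'))) (F ((a @ c) @ ([int N] @ \<beta>')))"
              using goodD2[OF gF, of "a @ c" "[int N] @ \<beta>'" "int N"] abS cS hb bN False by simp
            also have "F ((a @ c) @ [- int N] @ ([int N] @ \<beta>')) = F ((a @ c) @ \<beta>')"
            proof -
              have "beq (Suc N) ((a @ c) @ [- int N, - (- int N)] @ \<beta>') ((a @ c) @ \<beta>')"
                using abS cS hb bN by (intro beq.cancel) auto
              then show ?thesis using goodD1[OF gF] by simp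
            qed
            finally show "F (?p @ c @ ?q) = S (F ((a @ c) @ \<beta>')) (F ((a @ c) @ [int N] @ [] @ \<beta>'))"
              by simp
          qed
          show "f (?p @ c @ ?q) = g (?p @ c @ ?q)"
            using e[OF gf] e[OF gg] IH[of "a @ c" "[]"] ab cS by simp
        next
          fix c d assume c: "braid_word (N - 1) c" and d: "braid_word (N - 1) d"
          have cS: "braid_word N c" "braid_word (Suc N) c" using c bw_mono by auto
          have dS: "braid_word N d" "braid_word (Suc N) d" using d bw_mono by auto
          assume N2: "2 \<le> N"
          have e: "\<And>F. good (Suc N) S S' F \<Longrightarrow> F (?p @ (c @ [int N - 1] @ d) @ ?q) =
               F ((a @ c @ [int N - 1]) @ [int N] @ ([int N - 1] @ d) @ \<beta>')"
          proof -
            fix F assume gF: "good (Suc N) S S' F"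
            have bw1: "braid_word (Suc N) [int N - 1]" using N2 by auto
            have "F (?p @ (c @ [int N - 1] @ d) @ ?q) = F (a @ c @ [int N] @ ([int N - 1] @ d @ [int N] @ \<beta>'))"
              using goodD1[OF gF commute_small[OF c, of a "[int N - 1] @ d @ [int N] @ \<beta>'"]] abS cS dS hb bN bw1 by simp
            also have "\<dots> = F ((a @ c @ [int N, int N - 1]) @ [int N] @ d @ \<beta>')"
            proof -
              have "beq (Suc N) ((a @ c @ [int N, int N - 1]) @ d @ [int N] @ \<beta>') ((a @ c @ [int N, int N - 1]) @ [int N] @ d @ \<beta>')"
              proof (rule beq.sym, rule beq_commute_word)
                show "\<forall>g\<in>set d. 2 \<le> \<bar>\<bar>g\<bar> - \<bar>int N\<bar>\<bar>" using d by (auto simp: braid_word_def)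
                show "braid_word (Suc N) ((a @ c @ [int N, int N - 1]) @ [int N] @ d @ \<beta>')"
                  using abS cS dS hb bN bw1 by simp
              qed
              then show ?thesis using goodD1[OF gF] by simp
            qed
            also have "\<dots> = F ((a @ c) @ [int N - 1, int N - 1 + 1, int N - 1] @ (d @ \<beta>'))"
            proof -
              have "beq (Suc N) ((a @ c) @ [int N - 1, int N - 1 + 1, int N - 1] @ (d @ \<beta>'))
                   ((a @ c) @ [int N - 1 + 1, int N - 1, int N - 1 + 1] @ (d @ \<beta>'))"
                using abS cS dS hb N2 by (intro beq.braid) auto
              then show ?thesis using goodD1[OF gF] by simp
            qed
            finally show "F (?p @ (c @ [int N - 1] @ d) @ ?q) =
               F ((a @ c @ [int N - 1]) @ [int N] @ ([int N - 1] @ d) @ \<beta>')" by simp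
          qed
          have "braid_word N (a @ c @ [int N - 1])" "braid_word N ([int N - 1] @ d)"
            using ab cS dS N2 by auto
          then show "f (?p @ (c @ [int N - 1] @ d) @ ?q) = g (?p @ (c @ [int N - 1] @ d) @ ?q)"
            using e[OF gf] e[OF gg] IH by metis
        qed
        then show ?thesis by simp
      qed
      show ?case
      proof (intro allI impI)
        fix a b assume ab: "braid_word N a" "braid_word N b"
        have abS: "braid_word (Suc N) a" "braid_word (Suc N) b" using ab bw_mono by auto
        consider "\<bar>h\<bar> < int N" | "h = int N" | "h = - int N" using hb by linarith
        then show "f (a @ h # \<beta>') = g (a @ h # \<beta>') \<and>
              f (a @ [int N] @ b @ h # \<beta>') = g (a @ [int N] @ b @ h # \<beta>')"
        proof cases
          case 1
          then have "braid_word N [h]" using hb by auto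
          then show ?thesis using IH[of "a @ [h]" b] IH[of a "b @ [h]"] ab by simp
        next
          case 2
          then show ?thesis using IH[of a "[]"] X[OF ab] ab by simp
        next
          case 3
          have A: "f (a @ [- int N] @ \<beta>') = g (a @ [- int N] @ \<beta>')"
            using goodD3[OF gf, of a \<beta>' "int N"] goodD3[OF gg, of a \<beta>' "int N"] IH[of a "[]"] IH[of a b]
              abS hb bN False ab by simp
          have B: "f ((a @ [int N] @ b) @ [- int N] @ \<beta>') = g ((a @ [int N] @ b) @ [- int N] @ \<beta>')"
            using goodD3[OF gf, of "a @ [int N] @ b" \<beta>' "int N"] goodD3[OF gg, of "a @ [int N] @ b" \<beta>' "int N"]
              IH[of a b] X[OF ab] abS hb bN False ab by simp
          show ?thesis using A B 3 by simp
        qed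
      qed
    qed
    show ?thesis using claim[OF Suc.prems(6), rule_format, of "[]" "[]"] by simp
  qed
qed



context fixes P :: "nat \<Rightarrow> int list \<Rightarrow> laurent2" assumes H: "is_homfly P"
begin

lemma skein_inv:
  assumes "braid_word n (u @ x)" "braid_word n [i]" "i > 0"
  shows "P n (u @ [-i] @ x) = mono (-2) 0 * P n (u @ [i] @ x) - mono (-1) 1 * P n (u @ x)"
proof -
  have e: "P n (u @ [i] @ x) = mono 2 0 * P n (u @ [-i] @ x) + mono 1 1 * P n (u @ x)"
    using H_skein[OF H assms] .
  have "mono (-2) 0 * P n (u @ [i] @ x) = (mono (-2) 0 * mono 2 0) * P n (u @ [-i] @ x) + (mono (-2) 0 * mono 1 1) * P n (u @ x)"
    unfolding e by (simp add: algebra_simps)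
  also have "\<dots> = P n (u @ [-i] @ x) + mono (-1) 1 * P n (u @ x)"
    by (simp add: mono_mult mono_00)
  finally show ?thesis by simp
qed

lemma cskein:
  assumes "braid_word n (u @ x)" "braid_word n [i]" "i > 0"
  shows "coeff2 (P n (u @ [i] @ x)) a b = coeff2 (P n (u @ [-i] @ x)) (a - 2) b + coeff2 (P n (u @ x)) (a - 1) (b - 1)"
  using H_skein[OF H assms] by (simp add: coeff2_add coeff2_mono_mult)

lemma cskein':
  assumes "braid_word n (u @ x)" "braid_word n [i]" "i > 0"
  shows "coeff2 (P n (u @ [-i] @ x)) a b = coeff2 (P n (u @ [i] @ x)) (a + 2) b - coeff2 (P n (u @ x)) (a + 1) (b - 1)"
  using skein_inv[OF assms] by (simp add: coeff2_diff coeff2_mono_mult)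

lemma stab:
  assumes "n \<ge> 1" "braid_word n a"
  shows "P (Suc n) a = mono (-1) (-1) * (P n a - mono 2 0 * P n a)"
proof -
  have bw: "braid_word (Suc n) (a @ [])" "braid_word (Suc n) [int n]" "int n > 0"
    using assms bw_mono[of n a "Suc n"] by auto
  have "P (Suc n) (a @ [int n] @ []) = mono 2 0 * P (Suc n) (a @ [- int n] @ []) + mono 1 1 * P (Suc n) (a @ [])"
    using H_skein[OF H bw] .
  then have "P n a = mono 2 0 * P n a + mono 1 1 * P (Suc n) a"
    using H_markov[OF H assms] H_markov'[OF H assms] by simp
  then have "P n a - mono 2 0 * P n a = mono 1 1 * P (Suc n) a"
    by (metis add_diff_cancel_left')
  then have "mono (-1) (-1) * (P n a - mono 2 0 * P n a) = (mono (-1) (-1) * mono 1 1) * P (Suc n) a"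
    by (simp add: mult.assoc)
  then show ?thesis by (simp add: mono_mult mono_00)
qed

lemma cstab:
  assumes "n \<ge> 1" "braid_word n a"
  shows "coeff2 (P (Suc n) a) A B = coeff2 (P n a) (A + 1) (B + 1) - coeff2 (P n a) (A - 1) (B + 1)"
  using stab[OF assms] by (simp add: coeff2_diff coeff2_mono_mult)

lemma cmarkov:
  assumes "n \<ge> 1" "braid_word n a" "braid_word n b"
  shows "P (Suc n) (a @ [int n] @ b) = P n (b @ a)"
proof -
  have "P (Suc n) (a @ ([int n] @ b)) = P (Suc n) (([int n] @ b) @ a)"
    using assms bw_mono[of n _ "Suc n"] by (intro H_conj[OF H]) auto
  also have "\<dots> = P (Suc n) ((b @ a) @ [int n])"
    using assms bw_mono[of n _ "Suc n"] H_conj[OF H, of "Suc n" "[int n]" "b @ a"] by auto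
  also have "\<dots> = P n (b @ a)" using H_markov[OF H, of n "b @ a"] assms by simp
  finally show ?thesis by simp
qed

definition trunc :: "nat \<Rightarrow> int list \<Rightarrow> int \<Rightarrow> int \<Rightarrow> int" where
  "trunc n \<beta> = (\<lambda>a b. if a < exp_sum \<beta> - int n + 1 \<or> a > exp_sum \<beta> + int n - 1 then coeff2 (P n \<beta>) a b else 0)"

definition S1 :: "(int \<Rightarrow> int \<Rightarrow> int) \<Rightarrow> (int \<Rightarrow> int \<Rightarrow> int) \<Rightarrow> int \<Rightarrow> int \<Rightarrow> int" where
  "S1 p q = (\<lambda>a b. p (a - 2) b + q (a - 1) (b - 1))"
definition S1' :: "(int \<Rightarrow> int \<Rightarrow> int) \<Rightarrow> (int \<Rightarrow> int \<Rightarrow> int) \<Rightarrow> int \<Rightarrow> int \<Rightarrow> int" where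
  "S1' p q = (\<lambda>a b. p (a + 2) b - q (a + 1) (b - 1))"

lemma good_trunc: "good n S1 S1' (trunc n)"
  unfolding good_def
proof (intro conjI allI impI)
  fix w w' assume "beq n w w'"
  then show "trunc n w = trunc n w'" unfolding trunc_def using beq_es beq_P[OF H] by metis
next
  fix u x i assume a: "braid_word n (u @ x) \<and> braid_word n [i] \<and> 0 < i"
  then show "trunc n (u @ [i] @ x) = S1 (trunc n (u @ [- i] @ x)) (trunc n (u @ x))"
    unfolding trunc_def S1_def using cskein[of n u x i] by (auto simp: fun_eq_iff)
  show "trunc n (u @ [- i] @ x) = S1' (trunc n (u @ [i] @ x)) (trunc n (u @ x))"
    unfolding trunc_def S1'_def using cskein'[of n u x i] a by (auto simp: fun_eq_iff)
qed

lemma good_zero: "good n S1 S1' (\<lambda>_ _ _. 0)"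
  unfolding good_def S1_def S1'_def by simp

lemma mfw_trunc: "n \<ge> 1 \<Longrightarrow> braid_word n \<beta> \<Longrightarrow> trunc n \<beta> = (\<lambda>_ _. 0)"
proof (induction n arbitrary: \<beta> rule: nat_induct_at_least)
  case base
  then have "\<beta> = []" using bw_1 by simp
  have "P 1 [] = 1" by (rule H_one[OF H])
  then show ?case using \<open>\<beta> = []\<close> by (simp add: trunc_def fun_eq_iff coeff2_one)
next
  case (Suc n)
  show ?case
  proof (rule det[OF good_trunc good_zero, of "Suc n"])
    show "1 \<le> Suc n" by simp
    show "braid_word (Suc n) \<beta>" by fact
  next
    fix a assume a: "braid_word (Suc n - 1) a"
    then have a': "braid_word n a" by simp
    have z: "\<And>A B. A < exp_sum a - int n + 1 \<or> A > exp_sum a + int n - 1 \<Longrightarrow> coeff2 (P n a) A B = 0"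
      using Suc.IH[OF a'] unfolding trunc_def by (metis (no_types, lifting))
    show "trunc (Suc n) a = (\<lambda>_ _. 0)"
      unfolding trunc_def using cstab[OF Suc.hyps a'] z by (auto simp: fun_eq_iff)
  next
    fix a b assume a: "braid_word (Suc n - 1) a" and b: "braid_word (Suc n - 1) b"
    then have a': "braid_word n a" and b': "braid_word n b" by simp_all
    have z: "\<And>A B. A < exp_sum (b @ a) - int n + 1 \<or> A > exp_sum (b @ a) + int n - 1 \<Longrightarrow> coeff2 (P n (b @ a)) A B = 0"
      using Suc.IH[of "b @ a"] a' b' unfolding trunc_def by (metis (no_types, lifting) bw_append)
    show "trunc (Suc n) (a @ [int (Suc n) - 1] @ b) = (\<lambda>_ _. 0)"
      unfolding trunc_def using cmarkov[OF Suc.hyps a' b'] z Suc.hyps by (auto simp: fun_eq_iff)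
  qed
qed

lemma mfw:
  assumes "n \<ge> 1" "braid_word n \<beta>" "A < exp_sum \<beta> - int n + 1 \<or> A > exp_sum \<beta> + int n - 1"
  shows "coeff2 (P n \<beta>) A B = 0"
  using fun_cong[OF fun_cong[OF mfw_trunc[OF assms(1,2)], of A], of B] assms(3)
  unfolding trunc_def by auto

end


definition U :: "nat \<Rightarrow> nat \<Rightarrow> int list" where
  "U m n = rev (map int [m..<Suc n])"
definition Dn :: "nat \<Rightarrow> int list" where
  "Dn n = U 1 n"
definition J :: "nat \<Rightarrow> int list" where
  "J n = Dn n @ rev (Dn n)"

lemma set_U: "set (U m n) = int ` {m..n}"
  by (auto simp: U_def)

lemma U_step: "m \<le> n \<Longrightarrow> U m n = U (Suc m) n @ [int m]"
  by (simp add: U_def upt_conv_Cons)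
lemma U_empty: "U (Suc n) n = []"
  by (simp add: U_def)
lemma Dn_Suc: "Dn (Suc n) = int (Suc n) # Dn n"
  by (simp add: Dn_def U_def)
lemma Dn_0: "Dn 0 = []" by (simp add: Dn_def U_def)

lemma bw_U: "1 \<le> m \<Longrightarrow> n < N \<Longrightarrow> braid_word N (U m n)"
  by (auto simp: braid_word_def set_U)

lemma es_rev: "exp_sum (rev w) = exp_sum w"
  by (simp add: exp_sum_def sum_list_rev rev_map[symmetric])

lemma es_map_pos: "(\<forall>x\<in>set xs. x > 0) \<Longrightarrow> exp_sum (map int xs) = int (length xs)"
  by (induction xs) auto

lemma es_U: "exp_sum (U m n) = int (Suc n - m)" if "1 \<le> m"
  using es_map_pos[of "[m..<Suc n]"] that by (simp add: U_def es_rev del: upt_Suc)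

lemma es_Dn: "exp_sum (Dn n) = int n"
  by (simp add: Dn_def es_U)
lemma es_J: "exp_sum (J n) = 2 * int n"
  by (simp add: J_def es_Dn es_rev)

lemma garside_Suc: "garside (Suc n) = garside n @ Dn n"
  by (cases n) (simp_all add: Dn_def U_def)

lemma set_garside: "g \<in> set (garside n) \<Longrightarrow> 1 \<le> g \<and> g \<le> int n - 1"
proof (induction n)
  case 0 then show ?case by simp
next
  case (Suc n) then show ?case by (auto simp: garside_Suc Dn_def set_U)
qed

lemma bw_garside: "braid_word n (garside n)"
  using set_garside by (force simp: braid_word_def)

lemma es_garside: "2 * exp_sum (garside n) = int n * (int n - 1)"
proof (induction n)
  case 0 then show ?case by simp
next
  case (Suc n) then show ?case by (simp add: garside_Suc es_Dn algebra_simps)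
qed

declare beq.trans[trans]

lemma beq_trans': "beq n a b \<Longrightarrow> beq n b' c \<Longrightarrow> b = b' \<Longrightarrow> beq n a c"
  using beq.trans by blast

lemma beq_commute_word':
  "\<forall>g\<in>set w. \<bar>\<bar>g\<bar> - \<bar>h\<bar>\<bar> \<ge> 2 \<Longrightarrow> braid_word n (u @ [h] @ w @ x) \<Longrightarrow>
   beq n (u @ w @ [h] @ x) (u @ [h] @ w @ x)"
  by (rule beq.sym, rule beq_commute_word)

lemma Glemma: "beq (Suc n) (garside n @ Dn n) (rev (Dn n) @ garside n)"
proof (induction n)
  case 0 then show ?case by (simp add: Dn_0 beq.refl)
next
  case (Suc n)
  have b1: "braid_word (Suc (Suc n)) (garside n)" "braid_word (Suc (Suc n)) (Dn n)" "braid_word (Suc (Suc n)) (rev (Dn n))"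
    using bw_garside[of n] bw_mono by (auto simp: Dn_def braid_word_def set_U)
  have "beq (Suc (Suc n)) (garside n @ Dn n) (rev (Dn n) @ garside n)"
    using Suc.IH by (rule beq_mono) simp
  then have s1: "beq (Suc (Suc n)) ((garside n @ Dn n) @ [int (Suc n)] @ Dn n) ((rev (Dn n) @ garside n) @ [int (Suc n)] @ Dn n)"
    by (rule beq_ctxR) (use b1 in auto)
  have s2: "beq (Suc (Suc n)) (rev (Dn n) @ garside n @ [int (Suc n)] @ Dn n) (rev (Dn n) @ [int (Suc n)] @ garside n @ Dn n)"
  proof (rule beq_commute_word')
    show "\<forall>g\<in>set (garside n). 2 \<le> \<bar>\<bar>g\<bar> - \<bar>int (Suc n)\<bar>\<bar>" using set_garside[of _ n] by fastforce
    show "braid_word (Suc (Suc n)) (rev (Dn n) @ [int (Suc n)] @ garside n @ Dn n)" using b1 by simp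
  qed
  show ?case using beq_trans'[OF s1 s2] by (simp add: garside_Suc Dn_Suc)
qed

lemma J_letter:
  assumes k: "1 \<le> k" "k + 1 \<le> n"
  shows "beq (Suc n) ([int k] @ J n) (J n @ [int k])"
proof -
  let ?P = "U (k + 2) n" and ?Q = "Dn (k - 1)"
  have dec: "Dn n = ?P @ [int k + 1, int k] @ ?Q"
  proof -
    have "[1..<Suc n] = [1..<k] @ [k..<Suc n]" using k upt_add_eq_append[of 1 k "Suc n - k"] by simp
    moreover have "[k..<Suc n] = k # Suc k # [k+2..<Suc n]" using k by (simp add: upt_conv_Cons)
    moreover have "[1..<k] = [1..<Suc (k - 1)]" using k by simp
    ultimately show ?thesis by (simp add: Dn_def U_def)
  qed
  let ?N = "Suc n"
  have bP: "braid_word ?N ?P" "braid_word ?N (rev ?P)" using k by (auto intro!: bw_U simp: braid_word_def set_U)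
  have bQ: "braid_word ?N ?Q" "braid_word ?N (rev ?Q)" using k by (auto intro!: bw_U simp: Dn_def braid_word_def set_U)
  have bk: "braid_word ?N [int k]" "braid_word ?N [int k + 1]" using k by auto
  have fP: "\<forall>g\<in>set ?P. 2 \<le> \<bar>\<bar>g\<bar> - \<bar>int k\<bar>\<bar>" "\<forall>g\<in>set (rev ?P). 2 \<le> \<bar>\<bar>g\<bar> - \<bar>int k\<bar>\<bar>"
    by (auto simp: set_U)
  have fQ: "\<forall>g\<in>set (?Q @ rev ?Q). 2 \<le> \<bar>\<bar>g\<bar> - \<bar>int k + 1\<bar>\<bar>"
    by (auto simp: set_U Dn_def)
  have "J n = ?P @ [int k + 1, int k] @ ?Q @ rev ?Q @ [int k, int k + 1] @ rev ?P"
    unfolding J_def dec by simp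
  then have Jd: "J n = ?P @ [int k + 1, int k] @ ?Q @ rev ?Q @ [int k, int k + 1] @ rev ?P" .
  have "beq ?N ([int k] @ J n) (?P @ [int k, int k + 1, int k] @ ?Q @ rev ?Q @ [int k, int k + 1] @ rev ?P)"
    unfolding Jd using beq_commute_word[OF fP(1), of ?N "[]" "[int k + 1, int k] @ ?Q @ rev ?Q @ [int k, int k + 1] @ rev ?P"] bP bQ bk
    by simp
  also have "beq ?N \<dots> (?P @ [int k + 1, int k, int k + 1] @ ?Q @ rev ?Q @ [int k, int k + 1] @ rev ?P)"
    using beq.braid[of ?N ?P "?Q @ rev ?Q @ [int k, int k + 1] @ rev ?P" "int k"] bP bQ k by simp
  also have "beq ?N \<dots> (?P @ [int k + 1, int k] @ ?Q @ rev ?Q @ [int k + 1, int k, int k + 1] @ rev ?P)"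
    using beq_commute_word[OF fQ, of ?N "?P @ [int k + 1, int k]" "[int k, int k + 1] @ rev ?P"] bP bQ bk by simp
  also have "beq ?N \<dots> (?P @ [int k + 1, int k] @ ?Q @ rev ?Q @ [int k, int k + 1, int k] @ rev ?P)"
    using beq.sym[OF beq.braid[of ?N "?P @ [int k + 1, int k] @ ?Q @ rev ?Q" "rev ?P" "int k"]] bP bQ k by simp
  also have "beq ?N \<dots> (J n @ [int k])"
    unfolding Jd using beq_commute_word[OF fP(2), of ?N "?P @ [int k + 1, int k] @ ?Q @ rev ?Q @ [int k, int k + 1]" "[]"] bP bQ bk by simp
  finally show ?thesis .
qed

lemma bw_J: "braid_word (Suc n) (J n)"
  by (auto simp: J_def Dn_def braid_word_def set_U)

lemma J_word:
  assumes "braid_word n c"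
  shows "beq (Suc n) (c @ J n) (J n @ c)"
  using assms
proof (induction c)
  case Nil then show ?case using bw_J by (simp add: beq.refl)
next
  case (Cons h c)
  have hb: "h \<noteq> 0" "\<bar>h\<bar> \<le> int n - 1" "braid_word n c" using Cons.prems by auto
  have cS: "braid_word (Suc n) c" using hb bw_mono by auto
  have hS: "braid_word (Suc n) [h]" using hb by auto
  have L: "beq (Suc n) ([h] @ J n) (J n @ [h])"
  proof (cases "h > 0")
    case True
    define k where "k = nat h"
    have "h = int k" "1 \<le> k" "k + 1 \<le> n" using hb True by (auto simp: k_def)
    then show ?thesis using J_letter by simp
  next
    case False
    define k where "k = nat (- h)"
    have hk: "h = - int k" "1 \<le> k" "k + 1 \<le> n" using hb False by (auto simp: k_def)
    have kS: "braid_word (Suc n) [int k]" using hk by auto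
    have t1: "beq (Suc n) (([- int k] @ J n) @ [int k, - int k] @ []) (([- int k] @ J n) @ [])"
      by (rule beq.cancel) (use kS bw_J hk in auto)
    have t2: "beq (Suc n) ([- int k] @ (J n @ [int k]) @ [- int k]) ([- int k] @ ([int k] @ J n) @ [- int k])"
      by (rule beq_ctx, rule beq.sym, rule J_letter) (use hk in auto)
    have t3: "beq (Suc n) ([] @ [- int k, - (- int k)] @ (J n @ [- int k])) ([] @ (J n @ [- int k]))"
      by (rule beq.cancel) (use kS bw_J hk in auto)
    show ?thesis using beq_trans'[OF beq_trans'[OF beq.sym[OF t1] t2] t3] hk by simp
  qed
  have "beq (Suc n) ([h] @ (c @ J n)) ([h] @ (J n @ c))"
    using Cons.IH[OF hb(3)] hS by (intro beq_ctxL)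
  moreover have "beq (Suc n) (([h] @ J n) @ c) ((J n @ [h]) @ c)"
    using L cS by (intro beq_ctxR)
  ultimately show ?case using beq.trans by fastforce
qed

lemma Tlemma:
  assumes "1 \<le> m" "m \<le> n"
  shows "\<exists>A B. braid_word n A \<and> braid_word n B \<and>
     beq (Suc n) (U (Suc m) n @ [int m] @ rev (U (Suc m) n)) (A @ [int n] @ B)"
proof -
  have "k < n \<Longrightarrow> \<exists>A B. braid_word n A \<and> braid_word n B \<and>
     beq (Suc n) (U (Suc (n - k)) n @ [int (n - k)] @ rev (U (Suc (n - k)) n)) (A @ [int n] @ B)" for k
  proof (induction k)
    case 0
    then show ?case by (intro exI[of _ "[]"]) (auto simp: U_empty intro: beq.refl)
  next
    case (Suc k)
    then obtain A B where AB: "braid_word n A" "braid_word n B"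
      "beq (Suc n) (U (Suc (n - k)) n @ [int (n - k)] @ rev (U (Suc (n - k)) n)) (A @ [int n] @ B)"
      by auto
    define m where "m = n - k"
    define m' where "m' = n - Suc k"
    have mm: "m = Suc m'" "1 \<le> m'" "m \<le> n" using Suc.prems by (auto simp: m_def m'_def)
    let ?V = "U (Suc m) n"
    have Ueq: "U (Suc m') n = ?V @ [int m]" using mm U_step[of m n] by simp
    have bV: "braid_word (Suc n) ?V" "braid_word (Suc n) (rev ?V)" by (auto simp: braid_word_def set_U)
    have bm: "braid_word (Suc n) [int m]" "braid_word (Suc n) [int m']" using mm by auto
    have fV: "\<forall>g\<in>set ?V. 2 \<le> \<bar>\<bar>g\<bar> - \<bar>int m'\<bar>\<bar>" "\<forall>g\<in>set (rev ?V). 2 \<le> \<bar>\<bar>g\<bar> - \<bar>int m'\<bar>\<bar>"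
      using mm by (auto simp: set_U)
    have w: "U (Suc m') n @ [int m'] @ rev (U (Suc m') n) = ?V @ [int m' + 1, int m', int m' + 1] @ rev ?V"
      using Ueq mm by simp
    have "beq (Suc n) (U (Suc m') n @ [int m'] @ rev (U (Suc m') n)) (?V @ [int m', int m' + 1, int m'] @ rev ?V)"
      unfolding w using beq.sym[OF beq.braid[of "Suc n" ?V "rev ?V" "int m'"]] bV mm by simp
    also have "beq (Suc n) \<dots> ([int m'] @ ?V @ [int m' + 1, int m'] @ rev ?V)"
      using beq_commute_word'[OF fV(1), of "Suc n" "[]" "[int m' + 1, int m'] @ rev ?V"] bV bm mm by simp
    also have "beq (Suc n) \<dots> ([int m'] @ (?V @ [int m] @ rev ?V) @ [int m'])"
      using beq_commute_word[OF fV(2), of "Suc n" "[int m'] @ ?V @ [int m]" "[]"] bV bm mm by (simp add: ac_simps)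
    also have "beq (Suc n) \<dots> ([int m'] @ (A @ [int n] @ B) @ [int m'])"
      by (rule beq_ctx) (use AB(3) m_def bm in auto)
    finally have "beq (Suc n) (U (Suc m') n @ [int m'] @ rev (U (Suc m') n)) (([int m'] @ A) @ [int n] @ (B @ [int m']))"
      by simp
    moreover have "braid_word n ([int m'] @ A)" "braid_word n (B @ [int m'])" using AB mm by auto
    ultimately show ?case unfolding m'_def by blast
  qed
  from this[of "n - m"] assms show ?thesis by simp
qed

lemma Dn_J: "1 \<le> n \<Longrightarrow> J n = [int n] @ J (n - 1) @ [int n]"
  by (cases n) (simp_all add: J_def Dn_Suc)

lemma J_U: "J n = U 1 n @ rev (U 1 n)"
  by (simp add: J_def Dn_def)

lemma Delta2: "beq (Suc n) (garside (Suc n) @ garside (Suc n)) (garside n @ garside n @ J n)"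
proof -
  let ?G = "garside n" and ?D = "Dn n"
  have bG: "braid_word (Suc n) ?G" "braid_word n ?G" using bw_garside bw_mono[OF bw_garside, of n "Suc n"] by auto
  have bD: "braid_word (Suc n) ?D" "braid_word (Suc n) (rev ?D)" by (auto simp: Dn_def braid_word_def set_U)
  have t1: "beq (Suc n) ((?G @ ?D) @ (?G @ ?D) @ []) ((?G @ ?D) @ (rev ?D @ ?G) @ [])"
    by (rule beq_ctx[OF Glemma]) (use bG bD in auto)
  have t2: "beq (Suc n) ([] @ ?G @ J n) ([] @ J n @ ?G)"
    using J_word[OF bG(2)] by simp
  have t3: "beq (Suc n) (?G @ (?G @ J n) @ []) (?G @ (J n @ ?G) @ [])"
    by (rule beq_ctx[OF J_word[OF bG(2)]]) (use bG in auto)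
  show ?thesis unfolding garside_Suc
    using beq_trans'[OF t1 beq.sym[OF t3]] by (simp add: J_def)
qed



context fixes P :: "nat \<Rightarrow> int list \<Rightarrow> laurent2" assumes H: "is_homfly P"
begin

definition Lo :: "nat \<Rightarrow> int list \<Rightarrow> int \<Rightarrow> int" where
  "Lo n \<beta> = (\<lambda>b. coeff2 (P n \<beta>) (exp_sum \<beta> - int n + 1) b)"
definition Hi :: "nat \<Rightarrow> int list \<Rightarrow> int \<Rightarrow> int" where
  "Hi n \<beta> = (\<lambda>b. coeff2 (P n \<beta>) (exp_sum \<beta> + int n - 1) b)"
definition S2 :: "(int \<Rightarrow> int) \<Rightarrow> (int \<Rightarrow> int) \<Rightarrow> int \<Rightarrow> int" where
  "S2 p q = (\<lambda>b. p b + q (b - 1))"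
definition S2' :: "(int \<Rightarrow> int) \<Rightarrow> (int \<Rightarrow> int) \<Rightarrow> int \<Rightarrow> int" where
  "S2' p q = (\<lambda>b. p b - q (b - 1))"

lemma good_Lo: "good n S2 S2' (Lo n)"
  unfolding good_def
proof (intro conjI allI impI)
  fix w w' assume "beq n w w'"
  then show "Lo n w = Lo n w'" unfolding Lo_def using beq_es beq_P[OF H] by metis
next
  fix u x i assume a: "braid_word n (u @ x) \<and> braid_word n [i] \<and> 0 < i"
  then show "Lo n (u @ [i] @ x) = S2 (Lo n (u @ [- i] @ x)) (Lo n (u @ x))"
    unfolding Lo_def S2_def using cskein[OF H, of n u x i] by (auto simp: fun_eq_iff algebra_simps)
  show "Lo n (u @ [- i] @ x) = S2' (Lo n (u @ [i] @ x)) (Lo n (u @ x))"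
    unfolding Lo_def S2'_def using cskein'[OF H, of n u x i "exp_sum u + exp_sum x - int n"] a by (auto simp: fun_eq_iff algebra_simps)
qed

lemma good_Hi: "good n S2 S2' (Hi n)"
  unfolding good_def
proof (intro conjI allI impI)
  fix w w' assume "beq n w w'"
  then show "Hi n w = Hi n w'" unfolding Hi_def using beq_es beq_P[OF H] by metis
next
  fix u x i assume a: "braid_word n (u @ x) \<and> braid_word n [i] \<and> 0 < i"
  then show "Hi n (u @ [i] @ x) = S2 (Hi n (u @ [- i] @ x)) (Hi n (u @ x))"
    unfolding Hi_def S2_def using cskein[OF H, of n u x i] by (auto simp: fun_eq_iff algebra_simps)
  show "Hi n (u @ [- i] @ x) = S2' (Hi n (u @ [i] @ x)) (Hi n (u @ x))"
    unfolding Hi_def S2'_def using cskein'[OF H, of n u x i "exp_sum u + exp_sum x + int n - 2"] a by (auto simp: fun_eq_iff algebra_simps)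
qed

lemma Hi_beq: "beq n w w' \<Longrightarrow> Hi n w = Hi n w'"
  using good_Hi goodD1 by metis
lemma Lo_conj: "braid_word n (u @ x) \<Longrightarrow> Lo n (u @ x) = Lo n (x @ u)"
  unfolding Lo_def using H_conj[OF H, of n u x] by (simp add: ac_simps)
lemma Hi_conj: "braid_word n (u @ x) \<Longrightarrow> Hi n (u @ x) = Hi n (x @ u)"
  unfolding Hi_def using H_conj[OF H, of n u x] by (simp add: ac_simps)

lemma Hi_H1: "n \<ge> 1 \<Longrightarrow> braid_word n a \<Longrightarrow> braid_word n b \<Longrightarrow> Hi (Suc n) (a @ [int n] @ b) = (\<lambda>_. 0)"
  unfolding Hi_def using cmarkov[OF H, of n a b] mfw[OF H, of n "b @ a"] by (auto simp: fun_eq_iff)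

lemma Hi_H2: "n \<ge> 1 \<Longrightarrow> braid_word n a \<Longrightarrow> Hi (Suc n) a = (\<lambda>b. - Hi n a (b + 1))"
  unfolding Hi_def using cstab[OF H, of n a] mfw[OF H, of n a] by (auto simp: fun_eq_iff)

lemma Lo_L2: "n \<ge> 1 \<Longrightarrow> braid_word n a \<Longrightarrow> Lo (Suc n) a = (\<lambda>b. Lo n a (b + 1))"
  unfolding Lo_def using cstab[OF H, of n a] mfw[OF H, of n a] by (auto simp: fun_eq_iff)

lemma Lo_L1: "n \<ge> 1 \<Longrightarrow> braid_word n a \<Longrightarrow> braid_word n b \<Longrightarrow> Lo (Suc n) (a @ [int n] @ b) = Lo n (b @ a)"
  unfolding Lo_def using cmarkov[OF H, of n a b] by (auto simp: fun_eq_iff algebra_simps)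

lemma K1:
  assumes n: "n \<ge> 1" and x: "braid_word n x"
  shows "Hi (Suc n) (x @ J n) = Hi (Suc n) x"
proof -
  have xS: "braid_word (Suc n) x" using x bw_mono by auto
  have "k \<le> n \<Longrightarrow> Hi (Suc n) (x @ U (Suc n - k) n @ rev (U (Suc n - k) n)) = Hi (Suc n) x" for k
  proof (induction k)
    case 0 then show ?case by (simp add: U_empty)
  next
    case (Suc k)
    define m where "m = n - k"
    have m: "1 \<le> m" "m \<le> n" "Suc n - Suc k = m" "Suc n - k = Suc m" using Suc.prems by (auto simp: m_def)
    let ?V = "U (Suc m) n"
    have bV: "braid_word (Suc n) ?V" "braid_word (Suc n) (rev ?V)" by (auto simp: braid_word_def set_U)
    have bm: "braid_word (Suc n) [int m]" using m by auto
    have IH: "Hi (Suc n) (x @ ?V @ rev ?V) = Hi (Suc n) x" using Suc m by simp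
    have Ueq: "U m n = ?V @ [int m]" using m U_step by simp
    have e1: "Hi (Suc n) ((x @ ?V) @ [int m] @ ([int m] @ rev ?V)) =
       S2 (Hi (Suc n) ((x @ ?V) @ [- int m] @ ([int m] @ rev ?V))) (Hi (Suc n) ((x @ ?V) @ ([int m] @ rev ?V)))"
      using goodD2[OF good_Hi, of "Suc n" "x @ ?V" "[int m] @ rev ?V" "int m"] xS bV bm m by simp
    have e2: "Hi (Suc n) ((x @ ?V) @ [- int m] @ ([int m] @ rev ?V)) = Hi (Suc n) x"
    proof -
      have "beq (Suc n) ((x @ ?V) @ [- int m, - (- int m)] @ rev ?V) ((x @ ?V) @ rev ?V)"
        by (rule beq.cancel) (use xS bV bm in auto)
      then show ?thesis using Hi_beq IH by simp
    qed
    have e3: "Hi (Suc n) ((x @ ?V) @ ([int m] @ rev ?V)) = (\<lambda>_. 0)"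
    proof -
      obtain A B where AB: "braid_word n A" "braid_word n B"
        "beq (Suc n) (?V @ [int m] @ rev ?V) (A @ [int n] @ B)" using Tlemma[OF m(1,2)] by blast
      have "beq (Suc n) (x @ (?V @ [int m] @ rev ?V) @ []) (x @ (A @ [int n] @ B) @ [])"
        by (rule beq_ctx[OF AB(3)]) (use xS in auto)
      then have "Hi (Suc n) ((x @ ?V) @ ([int m] @ rev ?V)) = Hi (Suc n) ((x @ A) @ [int n] @ B)"
        using Hi_beq by simp
      also have "\<dots> = (\<lambda>_. 0)" using Hi_H1[OF n, of "x @ A" B] x AB by simp
      finally show ?thesis .
    qed
    show ?case using e1 e2 e3 Ueq m by (simp add: S2_def)
  qed
  from this[of n] show ?thesis by (simp add: J_U)
qed

lemma K2:
  assumes n: "n \<ge> 1" and x: "braid_word n x"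
  shows "Hi (Suc n) (x @ [int n] @ J n) = (\<lambda>b. - Hi n x b)"
proof -
  let ?M = "J (n - 1)"
  have bM: "braid_word n ?M" using bw_J[of "n - 1"] n by simp
  have xS: "braid_word (Suc n) x" and MS: "braid_word (Suc n) ?M" using x bM bw_mono by auto
  have Jd: "J n = [int n] @ ?M @ [int n]" using Dn_J[OF n] .
  have bn: "braid_word (Suc n) [int n]" using n by auto
  have "Hi (Suc n) (x @ [int n] @ ([int n] @ ?M @ [int n])) =
     S2 (Hi (Suc n) (x @ [- int n] @ ([int n] @ ?M @ [int n]))) (Hi (Suc n) (x @ ([int n] @ ?M @ [int n])))"
    using goodD2[OF good_Hi, of "Suc n" x "[int n] @ ?M @ [int n]" "int n"] xS MS bn n by simp
  moreover have "Hi (Suc n) (x @ [- int n] @ ([int n] @ ?M @ [int n])) = (\<lambda>_. 0)"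
  proof -
    have "beq (Suc n) (x @ [- int n, - (- int n)] @ (?M @ [int n])) (x @ (?M @ [int n]))"
      by (rule beq.cancel) (use xS MS bn in auto)
    then have "Hi (Suc n) (x @ [- int n] @ ([int n] @ ?M @ [int n])) = Hi (Suc n) ((x @ ?M) @ [int n] @ [])"
      using Hi_beq by simp
    also have "\<dots> = (\<lambda>_. 0)" using Hi_H1[OF n, of "x @ ?M" "[]"] x bM by simp
    finally show ?thesis .
  qed
  moreover have "Hi (Suc n) (x @ ([int n] @ ?M @ [int n])) = (\<lambda>b. - Hi n x (b + 1))"
    using K1[OF n x] Hi_H2[OF n x] Jd by simp
  ultimately show ?thesis using Jd by (simp add: S2_def fun_eq_iff)
qed

definition R :: "nat \<Rightarrow> int list \<Rightarrow> int \<Rightarrow> int" where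
  "R n \<beta> = (\<lambda>b. (-1) ^ (n - 1) * Hi n (\<beta> @ garside n @ garside n) b)"

lemma good_R: "good n S2 S2' (R n)"
  unfolding good_def
proof (intro conjI allI impI)
  have bG: "braid_word n (garside n @ garside n)" using bw_garside by simp
  fix w w' assume "beq n w w'"
  then have "beq n (w @ (garside n @ garside n)) (w' @ (garside n @ garside n))"
    using bG by (rule beq_ctxR)
  then show "R n w = R n w'" unfolding R_def using Hi_beq by simp
next
  have bG: "braid_word n (garside n @ garside n)" using bw_garside by simp
  fix u x i assume a: "braid_word n (u @ x) \<and> braid_word n [i] \<and> 0 < i"
  then have a': "braid_word n (u @ (x @ garside n @ garside n))" using bG by simp
  show "R n (u @ [i] @ x) = S2 (R n (u @ [- i] @ x)) (R n (u @ x))"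
    unfolding R_def S2_def using goodD2[OF good_Hi a', of i] a by (auto simp: fun_eq_iff S2_def distrib_left)
  show "R n (u @ [- i] @ x) = S2' (R n (u @ [i] @ x)) (R n (u @ x))"
    unfolding R_def S2'_def using goodD3[OF good_Hi a', of i] a by (auto simp: fun_eq_iff S2'_def right_diff_distrib)
qed

lemma main: "n \<ge> 1 \<Longrightarrow> braid_word n \<beta> \<Longrightarrow> Lo n \<beta> = R n \<beta>"
proof (induction n arbitrary: \<beta> rule: nat_induct_at_least)
  case base
  then have "\<beta> = []" using bw_1 by simp
  then show ?case by (simp add: Lo_def R_def Hi_def)
next
  case (Suc n)
  let ?G = "garside n" and ?G' = "garside (Suc n)"
  have bG: "braid_word n ?G" "braid_word (Suc n) ?G" using bw_garside bw_mono[OF bw_garside, of n "Suc n"] by auto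
  have sg: "(-1::int) ^ (Suc n - 1) = - ((-1) ^ (n - 1))" using Suc.hyps by (cases n) auto
  show ?case
  proof (rule det[OF good_Lo good_R, of "Suc n"])
    show "1 \<le> Suc n" by simp
    show "braid_word (Suc n) \<beta>" by fact
  next
    fix a assume "braid_word (Suc n - 1) a"
    then have a: "braid_word n a" "braid_word (Suc n) a" using bw_mono by auto
    have aGG: "braid_word n (a @ ?G @ ?G)" using a bG by simp
    have "beq (Suc n) (a @ (?G' @ ?G') @ []) (a @ (?G @ ?G @ J n) @ [])"
      by (rule beq_ctx[OF Delta2]) (use a in auto)
    then have "Hi (Suc n) (a @ ?G' @ ?G') = Hi (Suc n) ((a @ ?G @ ?G) @ J n)"
      using Hi_beq by simp
    also have "\<dots> = Hi (Suc n) (a @ ?G @ ?G)" using K1[OF Suc.hyps aGG] .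
    also have "\<dots> = (\<lambda>b. - Hi n (a @ ?G @ ?G) (b + 1))" using Hi_H2[OF Suc.hyps aGG] .
    finally have e: "Hi (Suc n) (a @ ?G' @ ?G') = (\<lambda>b. - Hi n (a @ ?G @ ?G) (b + 1))" .
    have "Lo (Suc n) a = (\<lambda>b. Lo n a (b + 1))" using Lo_L2[OF Suc.hyps a(1)] .
    also have "\<dots> = (\<lambda>b. R n a (b + 1))" using Suc.IH[OF a(1)] by simp
    finally show "Lo (Suc n) a = R (Suc n) a"
      unfolding R_def using e sg by (simp add: fun_eq_iff)
  next
    fix a b assume "braid_word (Suc n - 1) a" "braid_word (Suc n - 1) b"
    then have a: "braid_word n a" "braid_word (Suc n) a" and b: "braid_word n b" "braid_word (Suc n) b"
      using bw_mono by auto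
    have bGG: "braid_word n (b @ ?G @ ?G)" using b bG by simp
    have bn: "braid_word (Suc n) [int n]" using Suc.hyps by auto
    have w: "a @ [int (Suc n) - 1] @ b = a @ [int n] @ b" by simp
    have "Lo (Suc n) (a @ [int n] @ b) = Lo n (b @ a)" using Lo_L1[OF Suc.hyps a(1) b(1)] .
    also have "\<dots> = Lo n (a @ b)" using Lo_conj[of n b a] a b by simp
    also have "\<dots> = R n (a @ b)" using Suc.IH[of "a @ b"] a b by simp
    finally have L: "Lo (Suc n) (a @ [int n] @ b) = (\<lambda>c. (-1) ^ (n - 1) * Hi n (a @ b @ ?G @ ?G) c)"
      by (simp add: R_def)
    have "beq (Suc n) ((a @ [int n] @ b) @ (?G' @ ?G') @ []) ((a @ [int n] @ b) @ (?G @ ?G @ J n) @ [])"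
      by (rule beq_ctx[OF Delta2]) (use a b bn in auto)
    moreover have "beq (Suc n) ((a @ [int n]) @ ((b @ ?G @ ?G) @ J n) @ []) ((a @ [int n]) @ (J n @ (b @ ?G @ ?G)) @ [])"
      by (rule beq_ctx[OF J_word[OF bGG]]) (use a bn in auto)
    ultimately have "Hi (Suc n) (a @ [int n] @ b @ ?G' @ ?G') = Hi (Suc n) ((a @ [int n] @ J n) @ (b @ ?G @ ?G))"
      using Hi_beq by simp
    also have "\<dots> = Hi (Suc n) ((b @ ?G @ ?G) @ (a @ [int n] @ J n))"
      by (rule Hi_conj) (use a b bn bG bw_J in auto)
    also have "\<dots> = Hi (Suc n) ((b @ ?G @ ?G @ a) @ [int n] @ J n)" by simp
    also have "\<dots> = (\<lambda>c. - Hi n (b @ ?G @ ?G @ a) c)" using K2[OF Suc.hyps, of "b @ ?G @ ?G @ a"] a bGG by simp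
    also have "\<dots> = (\<lambda>c. - Hi n (a @ b @ ?G @ ?G) c)"
      using Hi_conj[of n "b @ ?G @ ?G" a] a bGG by simp
    finally show "Lo (Suc n) (a @ [int (Suc n) - 1] @ b) = R (Suc n) (a @ [int (Suc n) - 1] @ b)"
      unfolding w R_def using L sg by (simp add: fun_eq_iff)
  qed
qed

lemma main_coeff: "n \<ge> 1 \<Longrightarrow> braid_word n \<beta> \<Longrightarrow>
  coeff2 (P n \<beta>) (exp_sum \<beta> - int n + 1) b = (-1) ^ (n - 1) *
      coeff2 (P n (\<beta> @ garside n @ garside n)) (exp_sum (\<beta> @ garside n @ garside n) + int n - 1) b"
  using fun_cong[OF main, of n \<beta> b] unfolding Lo_def R_def Hi_def by simp

end

theorem theorem1p5:
  fixes P :: "nat \<Rightarrow> int list \<Rightarrow> laurent2"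
    and n :: nat and \<beta> :: "int list" and b :: int
  assumes "is_homfly P"
    and "n \<ge> 1"
    and "braid_word n \<beta>"
  shows "coeff2 (P n \<beta>) (exp_sum \<beta> - int n + 1) b =
         (-1) ^ (n - 1) *
         coeff2 (P n (\<beta> @ garside n @ garside n)) (exp_sum \<beta> + int n ^ 2 - 1) b"
proof -
  have 1: "coeff2 (P n \<beta>) (exp_sum \<beta> - int n + 1) b = (-1) ^ (n - 1) *
      coeff2 (P n (\<beta> @ garside n @ garside n)) (exp_sum (\<beta> @ garside n @ garside n) + int n - 1) b"
    using main_coeff[OF assms] .
  have e: "exp_sum (\<beta> @ garside n @ garside n) + int n - 1 = exp_sum \<beta> + int n ^ 2 - 1"
    using es_garside[of n] by (simp add: power2_eq_square algebra_simps)
  show ?thesis using 1 unfolding e .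
qed


end
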